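(* Let $\mathcal{H}=(C,F,D,G)$ be a hybrid system on $\mathcal{X}$, let $p$ be an atomic proposition and $K:=\{x\in\mathcal{X}:p(x)=1\}$. Then $(\phi,(t,j))\models\bigcirc p$ for every maximal solution $\phi$ to $\mathcal{H}$ and every $(t,j)\in\operatorname{dom}\phi$ if and only if all of the following hold: (a) each nontrivial solution $\phi$ to $\mathcal{H}$ satisfies $\phi(0,0)\in D$; (b) no flow of $\mathcal{H}$ is possible from any $x\in C$ (i.e., there is no solution $\phi$ with $\phi(0,0)=x\in C$ and $[0,\varepsilon)\times\{0\}\subset\operatorname{dom}\phi$ for some $\varepsilon>0$); (c) $G(D)\subset K\cap D$; (d) $\overline C\subset D$.
   Context: Hybrid systems. A hybrid system $\mathcal{H}=(C,F,D,G)$ on a state space $\mathcal{X}\subset\mathbb{R}^n$ is given by a flow set $C\subset\mathcal{X}$, a set-valued flow map $F:\mathcal{X}\rightrightarrows\mathcal{X}$, a jump set $D\subset\mathcal{X}$ and a set-valued jump map $G:\mathcal{X}\rightrightarrows\mathcal{X}$, and represents $\dot x\in F(x)$ for $x\in C$, $x^+\in G(x)$ for $x\in D$. Standing assumptions: $C\subset\operatorname{dom}F$, $D\subset\operatorname{dom}G$, $\overline{C}\cup D\cup G(D)\subset\mathcal{X}$ ($\overline C$ is the closure of $C$). A set $E\subset\mathbb{R}_{\ge0}\times\mathbb{N}$ is a hybrid time domain if for every $(T,J)\in E$ there are $0=t_0\le t_1\le\dots\le t_{J+1}$ with $E\cap([0,T]\times\{0,\dots,J\})=\bigcup_{j=0}^J([t_j,t_{j+1}]\times\{j\})$.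 A hybrid arc is a map $\phi:\operatorname{dom}\phi\to\mathbb{R}^n$ on a hybrid time domain such that for each $j$, $t\mapsto\phi(t,j)$ is locally absolutely continuous on $I^j=\{t:(t,j)\in\operatorname{dom}\phi\}$. A hybrid arc $\phi$ is a solution to $\mathcal{H}$ if (i) $\phi(0,0)\in\overline C\cup D$; (ii) for each $j$ such that $I^j$ has nonempty interior, $\phi(t,j)\in C$ for all $t\in\operatorname{int}I^j$ and $\dot\phi(t,j)\in F(\phi(t,j))$ for almost all $t\in I^j$; (iii) for each $(t,j)\in\operatorname{dom}\phi$ with $(t,j+1)\in\operatorname{dom}\phi$, $\phi(t,j)\in D$ and $\phi(t,j+1)\in G(\phi(t,j))$. A solution is nontrivial if its domain contains at least two points; it is maximal if it cannot be extended to a solution with strictly larger domain. Temporal logic. An atomic proposition is a function $p:\mathcal{X}\to\{0,1\}$; write $\phi(t,j)\Vdash p$ if $p(\phi(t,j))=1$. $(\phi,(t,j))\models p$ iff $\phi(t,j)\Vdash p$; $(\phi,(t,j))\models\bigcirc p$ iff $(t,j+1)\in\operatorname{dom}\phi$ and $(\phi,(t,j+1))\models p$. The set $K$ is assumed nonempty. *)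

theory Defs
  imports "HOL-Analysis.Analysis"
begin

definition sv_dom :: "('a \<Rightarrow> 'b set) \<Rightarrow> 'a set" where
  "sv_dom M = {x. M x \<noteq> {}}"

definition sv_image :: "('a \<Rightarrow> 'b set) \<Rightarrow> 'a set \<Rightarrow> 'b set" where
  "sv_image M S = (\<Union>x\<in>S. M x)"

definition hybrid_system :: "'a::euclidean_space set \<Rightarrow> 'a set \<Rightarrow> ('a \<Rightarrow> 'a set)
    \<Rightarrow> 'a set \<Rightarrow> ('a \<Rightarrow> 'a set) \<Rightarrow> bool" where
  "hybrid_system X C F D G \<longleftrightarrow>
     C \<subseteq> X \<and> D \<subseteq> X \<and>
     sv_dom F \<subseteq> X \<and> sv_dom G \<subseteq> X \<and> (\<forall>x. F x \<subseteq> X \<and> G x \<subseteq> X) \<and>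
     C \<subseteq> sv_dom F \<and> D \<subseteq> sv_dom G \<and>
     closure C \<union> D \<union> sv_image G D \<subseteq> X"

definition hybrid_time_domain :: "(real \<times> nat) set \<Rightarrow> bool" where
  "hybrid_time_domain E \<longleftrightarrow>
     E \<subseteq> {0..} \<times> UNIV \<and>
     (\<forall>T J. (T, J) \<in> E \<longrightarrow>
        (\<exists>\<tau>::nat \<Rightarrow> real. \<tau> 0 = 0 \<and> (\<forall>j\<le>J. \<tau> j \<le> \<tau> (Suc j)) \<and>
           E \<inter> ({0..T} \<times> {0..J}) = (\<Union>j\<le>J. {\<tau> j..\<tau> (Suc j)} \<times> {j})))"

definition tdom_slice :: "(real \<times> nat) set \<Rightarrow> nat \<Rightarrow> real set" where
  "tdom_slice E j = {t. (t, j) \<in> E}"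

definition absolutely_continuous_fun_on :: "real set \<Rightarrow> (real \<Rightarrow> 'a::real_normed_vector) \<Rightarrow> bool" where
  "absolutely_continuous_fun_on S f \<longleftrightarrow>
     (\<forall>\<epsilon>>0. \<exists>\<delta>>0. \<forall>(n::nat) (a::nat \<Rightarrow> real) b.
        (\<forall>k<n. a k \<le> b k \<and> {a k..b k} \<subseteq> S) \<and>
        disjoint_family_on (\<lambda>k. {a k<..<b k}) {..<n} \<and>
        (\<Sum>k<n. b k - a k) < \<delta> \<longrightarrow>
        (\<Sum>k<n. norm (f (b k) - f (a k))) < \<epsilon>)"

definition locally_absolutely_continuous_on :: "real set \<Rightarrow> (real \<Rightarrow> 'a::real_normed_vector) \<Rightarrow> bool" where
  "locally_absolutely_continuous_on I f \<longleftrightarrow>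
     (\<forall>a b. {a..b} \<subseteq> I \<longrightarrow> absolutely_continuous_fun_on {a..b} f)"

text \<open>A hybrid arc is a pair of a hybrid time domain E (its domain) and a map phi,
  of which only the values on E matter.\<close>
definition hybrid_arc :: "(real \<times> nat) set \<Rightarrow> (real \<times> nat \<Rightarrow> 'a::real_normed_vector) \<Rightarrow> bool" where
  "hybrid_arc E \<phi> \<longleftrightarrow> hybrid_time_domain E \<and>
     (\<forall>j. locally_absolutely_continuous_on (tdom_slice E j) (\<lambda>t. \<phi> (t, j)))"

definition is_solution :: "'a::euclidean_space set \<Rightarrow> ('a \<Rightarrow> 'a set) \<Rightarrow> 'a set \<Rightarrow> ('a \<Rightarrow> 'a set)
    \<Rightarrow> (real \<times> nat) set \<Rightarrow> (real \<times> nat \<Rightarrow> 'a) \<Rightarrow> bool" where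
  "is_solution C F D G E \<phi> \<longleftrightarrow>
     hybrid_arc E \<phi> \<and>
     (0, 0) \<in> E \<and> \<phi> (0, 0) \<in> closure C \<union> D \<and>
     (\<forall>j. interior (tdom_slice E j) \<noteq> {} \<longrightarrow>
        (\<forall>t\<in>interior (tdom_slice E j). \<phi> (t, j) \<in> C) \<and>
        (AE t in lebesgue. t \<in> tdom_slice E j \<longrightarrow>
           (\<exists>v. ((\<lambda>s. \<phi> (s, j)) has_vector_derivative v) (at t within tdom_slice E j)
                \<and> v \<in> F (\<phi> (t, j))))) \<and>
     (\<forall>t j. (t, j) \<in> E \<and> (t, Suc j) \<in> E \<longrightarrow> \<phi> (t, j) \<in> D \<and> \<phi> (t, Suc j) \<in> G (\<phi> (t, j)))"

definition nontrivial_solution where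
  "nontrivial_solution C F D G E \<phi> \<longleftrightarrow> is_solution C F D G E \<phi> \<and> (\<exists>s1\<in>E. \<exists>s2\<in>E. s1 \<noteq> s2)"

definition maximal_solution where
  "maximal_solution C F D G E \<phi> \<longleftrightarrow> is_solution C F D G E \<phi> \<and>
     \<not> (\<exists>E' \<psi>. is_solution C F D G E' \<psi> \<and> E \<subset> E' \<and> (\<forall>s\<in>E. \<psi> s = \<phi> s))"

definition models_next :: "(real \<times> nat) set \<Rightarrow> (real \<times> nat \<Rightarrow> 'a) \<Rightarrow> real \<times> nat \<Rightarrow> ('a \<Rightarrow> bool) \<Rightarrow> bool" where
  "models_next E \<phi> s p \<longleftrightarrow> (fst s, Suc (snd s)) \<in> E \<and> p (\<phi> (fst s, Suc (snd s)))"

end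

theory Submission
  imports Defs
begin

lemma ac_subsingleton:
  assumes "\<forall>x\<in>S. \<forall>y\<in>S. x = y"
  shows "absolutely_continuous_fun_on S f"
  unfolding absolutely_continuous_fun_on_def
proof (intro allI impI)
  fix \<epsilon> :: real assume "\<epsilon> > 0"
  show "\<exists>\<delta>>0. \<forall>(n::nat) (a::nat \<Rightarrow> real) b.
        (\<forall>k<n. a k \<le> b k \<and> {a k..b k} \<subseteq> S) \<and>
        disjoint_family_on (\<lambda>k. {a k<..<b k}) {..<n} \<and>
        (\<Sum>k<n. b k - a k) < \<delta> \<longrightarrow>
        (\<Sum>k<n. norm (f (b k) - f (a k))) < \<epsilon>"
  proof (intro exI[of _ 1] conjI allI impI)
    fix n :: nat and a b :: "nat \<Rightarrow> real"
    assume h: "(\<forall>k<n. a k \<le> b k \<and> {a k..b k} \<subseteq> S) \<and>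
        disjoint_family_on (\<lambda>k. {a k<..<b k}) {..<n} \<and> (\<Sum>k<n. b k - a k) < 1"
    have "\<And>k. k < n \<Longrightarrow> a k = b k"
    proof -
      fix k assume "k < n"
      with h have "a k \<le> b k" "{a k..b k} \<subseteq> S" by auto
      then have "a k \<in> S" "b k \<in> S" by auto
      with assms show "a k = b k" by blast
    qed
    then have "(\<Sum>k<n. norm (f (b k) - f (a k))) = 0" by simp
    with \<open>\<epsilon>>0\<close> show "(\<Sum>k<n. norm (f (b k) - f (a k))) < \<epsilon>" by simp
  qed simp
qed

lemma ac_cong:
  assumes "absolutely_continuous_fun_on S f" "\<And>x. x\<in>S \<Longrightarrow> f x = g x"
  shows "absolutely_continuous_fun_on S g"
  unfolding absolutely_continuous_fun_on_def
proof (intro allI impI)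
  fix \<epsilon> :: real assume "\<epsilon> > 0"
  with assms(1) obtain \<delta> where d: "\<delta>>0" and H: "\<forall>(n::nat) (a::nat \<Rightarrow> real) b.
        (\<forall>k<n. a k \<le> b k \<and> {a k..b k} \<subseteq> S) \<and>
        disjoint_family_on (\<lambda>k. {a k<..<b k}) {..<n} \<and>
        (\<Sum>k<n. b k - a k) < \<delta> \<longrightarrow>
        (\<Sum>k<n. norm (f (b k) - f (a k))) < \<epsilon>"
    unfolding absolutely_continuous_fun_on_def by blast
  show "\<exists>\<delta>>0. \<forall>(n::nat) (a::nat \<Rightarrow> real) b.
        (\<forall>k<n. a k \<le> b k \<and> {a k..b k} \<subseteq> S) \<and>
        disjoint_family_on (\<lambda>k. {a k<..<b k}) {..<n} \<and>
        (\<Sum>k<n. b k - a k) < \<delta> \<longrightarrow>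
        (\<Sum>k<n. norm (g (b k) - g (a k))) < \<epsilon>"
  proof (intro exI[of _ \<delta>] conjI allI impI)
    fix n :: nat and a b :: "nat \<Rightarrow> real"
    assume h: "(\<forall>k<n. a k \<le> b k \<and> {a k..b k} \<subseteq> S) \<and>
        disjoint_family_on (\<lambda>k. {a k<..<b k}) {..<n} \<and> (\<Sum>k<n. b k - a k) < \<delta>"
    have "(\<Sum>k<n. norm (g (b k) - g (a k))) = (\<Sum>k<n. norm (f (b k) - f (a k)))"
    proof (rule sum.cong)
      fix k assume "k \<in> {..<n}"
      with h have "a k \<le> b k" "{a k..b k} \<subseteq> S" by auto
      then have "a k \<in> S" "b k \<in> S" by auto
      then show "norm (g (b k) - g (a k)) = norm (f (b k) - f (a k))" using assms(2) by simp
    qed simp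
    with H h show "(\<Sum>k<n. norm (g (b k) - g (a k))) < \<epsilon>" by simp
  qed (rule d)
qed

lemma sol_cong:
  assumes "is_solution C F D G E \<phi>" "\<And>s. s\<in>E \<Longrightarrow> \<phi> s = \<psi> s"
  shows "is_solution C F D G E \<psi>"
proof -
  have sl: "\<And>t j. t \<in> tdom_slice E j \<Longrightarrow> \<phi> (t,j) = \<psi> (t,j)"
    using assms(2) by (simp add: tdom_slice_def)
  have arc: "hybrid_arc E \<psi>"
    using assms(1) unfolding is_solution_def hybrid_arc_def locally_absolutely_continuous_on_def
    by (meson ac_cong sl subsetD)
  have int: "\<And>j t. t \<in> interior (tdom_slice E j) \<Longrightarrow> t \<in> tdom_slice E j"
    using interior_subset by blast
  show ?thesis
    unfolding is_solution_def
  proof (intro conjI allI impI ballI)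
    show "(0, 0) \<in> E" using assms(1) by (simp add: is_solution_def)
    then show "\<psi> (0, 0) \<in> closure C \<union> D" using assms by (simp add: is_solution_def)
  next
    fix j assume ne: "interior (tdom_slice E j) \<noteq> {}"
    fix t assume "t \<in> interior (tdom_slice E j)"
    then show "\<psi> (t, j) \<in> C"
      using assms(1) int sl ne unfolding is_solution_def by metis
  next
    fix j assume ne: "interior (tdom_slice E j) \<noteq> {}"
    from ne assms(1) have ae: "AE t in lebesgue. t \<in> tdom_slice E j \<longrightarrow>
           (\<exists>v. ((\<lambda>s. \<phi> (s, j)) has_vector_derivative v) (at t within tdom_slice E j)
                \<and> v \<in> F (\<phi> (t, j)))" unfolding is_solution_def by blast
    show "AE t in lebesgue. t \<in> tdom_slice E j \<longrightarrow>
           (\<exists>v. ((\<lambda>s. \<psi> (s, j)) has_vector_derivative v) (at t within tdom_slice E j)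
                \<and> v \<in> F (\<psi> (t, j)))"
      using ae
    proof eventually_elim
      case (elim t)
      show ?case
      proof
        assume t: "t \<in> tdom_slice E j"
        with elim obtain v where v: "((\<lambda>s. \<phi> (s, j)) has_vector_derivative v) (at t within tdom_slice E j)" "v \<in> F (\<phi> (t, j))" by blast
        have "((\<lambda>s. \<psi> (s, j)) has_vector_derivative v) (at t within tdom_slice E j)"
          by (rule has_vector_derivative_transform[OF t _ v(1)]) (simp add: sl)
        with v(2) sl[OF t] show "\<exists>v. ((\<lambda>s. \<psi> (s, j)) has_vector_derivative v) (at t within tdom_slice E j)
                \<and> v \<in> F (\<psi> (t, j))" by auto
      qed
    qed
  next
    show "hybrid_arc E \<psi>" by (rule arc)
  next
    fix t j assume "(t, j) \<in> E \<and> (t, Suc j) \<in> E"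
    then show "\<psi> (t, j) \<in> D"
      using assms unfolding is_solution_def by metis
  next
    fix t j assume "(t, j) \<in> E \<and> (t, Suc j) \<in> E"
    then show "\<psi> (t, Suc j) \<in> G (\<psi> (t, j))"
      using assms unfolding is_solution_def by metis
  qed
qed


lemma sol_htd: "is_solution C F D G E \<phi> \<Longrightarrow> hybrid_time_domain E"
  by (simp add: is_solution_def hybrid_arc_def)
lemma sol_ac: "is_solution C F D G E \<phi> \<Longrightarrow> {a..b} \<subseteq> tdom_slice E j \<Longrightarrow>
    absolutely_continuous_fun_on {a..b} (\<lambda>t. \<phi> (t, j))"
  by (simp add: is_solution_def hybrid_arc_def locally_absolutely_continuous_on_def)
lemma sol_00: "is_solution C F D G E \<phi> \<Longrightarrow> (0,0) \<in> E"
  by (simp add: is_solution_def)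
lemma sol_start: "is_solution C F D G E \<phi> \<Longrightarrow> \<phi> (0,0) \<in> closure C \<union> D"
  by (simp add: is_solution_def)
lemma sol_int: "is_solution C F D G E \<phi> \<Longrightarrow> t \<in> interior (tdom_slice E j) \<Longrightarrow> \<phi> (t,j) \<in> C"
  unfolding is_solution_def by (metis empty_iff)
lemma sol_ae: "is_solution C F D G E \<phi> \<Longrightarrow> interior (tdom_slice E j) \<noteq> {} \<Longrightarrow>
   AE t in lebesgue. t \<in> tdom_slice E j \<longrightarrow>
           (\<exists>v. ((\<lambda>s. \<phi> (s, j)) has_vector_derivative v) (at t within tdom_slice E j)
                \<and> v \<in> F (\<phi> (t, j)))"
  unfolding is_solution_def by (elim conjE) (drule spec[of _ j], simp)
lemma sol_jump: "is_solution C F D G E \<phi> \<Longrightarrow> (t,j) \<in> E \<Longrightarrow> (t,Suc j) \<in> E \<Longrightarrow>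
   \<phi> (t,j) \<in> D \<and> \<phi> (t,Suc j) \<in> G (\<phi> (t,j))"
  unfolding is_solution_def by blast

lemma htd_obtain:
  assumes "hybrid_time_domain E" "(T,J) \<in> E"
  obtains \<tau> where "\<tau> 0 = 0" "\<And>j. j \<le> J \<Longrightarrow> \<tau> j \<le> \<tau> (Suc j)"
    "\<And>s i. (s,i) \<in> E \<and> 0 \<le> s \<and> s \<le> T \<and> i \<le> J \<longleftrightarrow> i \<le> J \<and> \<tau> i \<le> s \<and> s \<le> \<tau> (Suc i)"
proof -
  from assms obtain \<tau> where t0: "\<tau> 0 = 0" and mono: "\<forall>j\<le>J. \<tau> j \<le> \<tau> (Suc j)" and
    eq: "E \<inter> ({0..T} \<times> {0..J}) = (\<Union>j\<le>J. {\<tau> j..\<tau> (Suc j)} \<times> {j})"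
    unfolding hybrid_time_domain_def by blast
  have P: "\<And>s i. (s,i) \<in> E \<and> 0 \<le> s \<and> s \<le> T \<and> i \<le> J \<longleftrightarrow> i \<le> J \<and> \<tau> i \<le> s \<and> s \<le> \<tau> (Suc i)"
  proof -
    fix s i
    have "(s,i) \<in> E \<inter> ({0..T} \<times> {0..J}) \<longleftrightarrow> (s,i) \<in> (\<Union>j\<le>J. {\<tau> j..\<tau> (Suc j)} \<times> {j})"
      by (simp only: eq)
    then show "(s,i) \<in> E \<and> 0 \<le> s \<and> s \<le> T \<and> i \<le> J \<longleftrightarrow> i \<le> J \<and> \<tau> i \<le> s \<and> s \<le> \<tau> (Suc i)"
      by auto
  qed
  show ?thesis by (rule that[of \<tau>, OF t0 _ P]) (use mono in blast)
qed

lemma htd_nonneg: "hybrid_time_domain E \<Longrightarrow> (s,i) \<in> E \<Longrightarrow> 0 \<le> s"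
  unfolding hybrid_time_domain_def by auto

lemma htd_interval:
  assumes "hybrid_time_domain E" "(a,j)\<in>E" "(b,j)\<in>E" "a \<le> s" "s \<le> b"
  shows "(s,j)\<in>E"
proof -
  obtain \<tau> where P: "\<And>s i. (s,i) \<in> E \<and> 0 \<le> s \<and> s \<le> b \<and> i \<le> j \<longleftrightarrow> i \<le> j \<and> \<tau> i \<le> s \<and> s \<le> \<tau> (Suc i)"
    using htd_obtain[OF assms(1,3)] by metis
  have "0 \<le> a" using htd_nonneg assms by blast
  have "\<tau> j \<le> a" using P[of a j] assms \<open>0 \<le> a\<close> by auto
  moreover have "b \<le> \<tau> (Suc j)" using P[of b j] assms \<open>0 \<le> a\<close> by auto
  ultimately show ?thesis using P[of s j] assms by auto
qed

lemma htd_prefix: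
  assumes E: "hybrid_time_domain E" and E': "hybrid_time_domain E'" and sub: "E \<subseteq> E'"
    and TJ: "(T,J)\<in>E" and si: "(s,i)\<in>E'" "s \<le> T" "i \<le> J"
  shows "(s,i)\<in>E"
proof -
  obtain \<tau> where t0: "\<tau> 0 = 0" and tm: "\<And>j. j \<le> J \<Longrightarrow> \<tau> j \<le> \<tau> (Suc j)" and
    P: "\<And>s i. (s,i) \<in> E \<and> 0 \<le> s \<and> s \<le> T \<and> i \<le> J \<longleftrightarrow> i \<le> J \<and> \<tau> i \<le> s \<and> s \<le> \<tau> (Suc i)"
    using htd_obtain[OF E TJ] by metis
  obtain \<sigma> where s0: "\<sigma> 0 = 0" and sm: "\<And>j. j \<le> J \<Longrightarrow> \<sigma> j \<le> \<sigma> (Suc j)" and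
    Q: "\<And>s i. (s,i) \<in> E' \<and> 0 \<le> s \<and> s \<le> T \<and> i \<le> J \<longleftrightarrow> i \<le> J \<and> \<sigma> i \<le> s \<and> s \<le> \<sigma> (Suc i)"
    using htd_obtain[OF E' subsetD[OF sub TJ]] by metis
  have AB: "\<And>x k. k \<le> J \<Longrightarrow> \<tau> k \<le> x \<Longrightarrow> x \<le> \<tau> (Suc k) \<Longrightarrow> \<sigma> k \<le> x \<and> x \<le> \<sigma> (Suc k)"
  proof -
    fix x k assume "k \<le> J" "\<tau> k \<le> x" "x \<le> \<tau> (Suc k)"
    then have "(x,k) \<in> E \<and> 0 \<le> x \<and> x \<le> T \<and> k \<le> J" using P by blast
    then have "(x,k) \<in> E' \<and> 0 \<le> x \<and> x \<le> T \<and> k \<le> J" using sub by blast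
    then show "\<sigma> k \<le> x \<and> x \<le> \<sigma> (Suc k)" using Q by blast
  qed
  have eq: "\<And>k. k \<le> J \<Longrightarrow> \<sigma> k = \<tau> k"
  proof -
    fix k assume k: "k \<le> J"
    show "\<sigma> k = \<tau> k"
    proof (cases k)
      case 0 then show ?thesis using t0 s0 by simp
    next
      case (Suc m)
      have "\<sigma> k \<le> \<tau> k" using AB[of k "\<tau> k"] tm[OF k] k by auto
      moreover have "\<tau> k \<le> \<sigma> k" using AB[of m "\<tau> k"] tm[of m] k Suc by auto
      ultimately show ?thesis by simp
    qed
  qed
  have s0': "0 \<le> s" using htd_nonneg[OF E' si(1)] .
  have "\<sigma> i \<le> s \<and> s \<le> \<sigma> (Suc i)" using Q[of s i] si s0' by blast
  then have lo: "\<tau> i \<le> s" using eq si by simp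
  have hi: "s \<le> \<tau> (Suc i)"
  proof (cases "i < J")
    case True
    then show ?thesis using eq[of "Suc i"] \<open>\<sigma> i \<le> s \<and> s \<le> \<sigma> (Suc i)\<close> by simp
  next
    case False
    then have "i = J" using si by simp
    have "T \<le> \<tau> (Suc J)" using P[of T J] TJ htd_nonneg[OF E TJ] by auto
    then show ?thesis using \<open>i = J\<close> si by simp
  qed
  show ?thesis using P[of s i] lo hi si by auto
qed

lemma htd_degenerate:
  assumes E: "hybrid_time_domain E" and ni: "\<And>j. interior (tdom_slice E j) = {}" and TJ: "(T,J) \<in> E"
  shows "T = 0 \<and> (\<forall>i\<le>J. (0,i)\<in>E)"
proof -
  obtain \<tau> where t0: "\<tau> 0 = 0" and tm: "\<And>j. j \<le> J \<Longrightarrow> \<tau> j \<le> \<tau> (Suc j)" and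
    P: "\<And>s i. (s,i) \<in> E \<and> 0 \<le> s \<and> s \<le> T \<and> i \<le> J \<longleftrightarrow> i \<le> J \<and> \<tau> i \<le> s \<and> s \<le> \<tau> (Suc i)"
    using htd_obtain[OF E TJ] by metis
  have st: "\<And>i. i \<le> J \<Longrightarrow> \<tau> (Suc i) = \<tau> i"
  proof -
    fix i assume i: "i \<le> J"
    have "{\<tau> i..\<tau> (Suc i)} \<subseteq> tdom_slice E i"
    proof
      fix x assume "x \<in> {\<tau> i..\<tau> (Suc i)}"
      then have "(x,i) \<in> E" using P[of x i] i by auto
      then show "x \<in> tdom_slice E i" by (simp add: tdom_slice_def)
    qed
    then have "interior {\<tau> i..\<tau> (Suc i)} = {}" using ni[of i]
      by (metis interior_mono subset_empty)
    then have "\<not> \<tau> i < \<tau> (Suc i)" by auto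
    then show "\<tau> (Suc i) = \<tau> i" using tm[OF i] by simp
  qed
  have z: "\<And>i. i \<le> Suc J \<Longrightarrow> \<tau> i = 0"
  proof -
    fix i show "i \<le> Suc J \<Longrightarrow> \<tau> i = 0"
      by (induction i) (auto simp: t0 st)
  qed
  have "T = 0" using P[of T J] TJ htd_nonneg[OF E TJ] z[of J] z[of "Suc J"] by auto
  moreover have "\<forall>i\<le>J. (0,i)\<in>E"
  proof (intro allI impI)
    fix i assume i: "i \<le> J"
    have "\<tau> i = 0" "\<tau> (Suc i) = 0" using z i by auto
    moreover have "0 \<le> T" using htd_nonneg[OF E TJ] .
    ultimately show "(0,i)\<in>E" using P[of 0 i] i by auto
  qed
  ultimately show ?thesis by blast
qed

lemma htd_discrete:
  assumes "\<And>i j. j \<in> S \<Longrightarrow> i \<le> j \<Longrightarrow> i \<in> S"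
  shows "hybrid_time_domain ({0::real} \<times> S)"
  unfolding hybrid_time_domain_def
proof (intro conjI allI impI)
  show "{0::real} \<times> S \<subseteq> {0..} \<times> UNIV" by auto
  fix T J assume "(T, J) \<in> {0::real} \<times> S"
  then have T: "T = 0" "J \<in> S" by auto
  show "\<exists>\<tau>::nat \<Rightarrow> real. \<tau> 0 = 0 \<and> (\<forall>j\<le>J. \<tau> j \<le> \<tau> (Suc j)) \<and>
           {0} \<times> S \<inter> ({0..T} \<times> {0..J}) = (\<Union>j\<le>J. {\<tau> j..\<tau> (Suc j)} \<times> {j})"
    by (rule exI[of _ "\<lambda>_. 0"]) (use T assms in auto)
qed

lemma htd_flow:
  assumes "(e::real) \<ge> 0"
  shows "hybrid_time_domain ({0..e} \<times> {0})"
  unfolding hybrid_time_domain_def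
proof (intro conjI allI impI)
  show "{0..e} \<times> {0} \<subseteq> {0..} \<times> UNIV" by auto
  fix T J assume "(T, J) \<in> {0..e} \<times> {0::nat}"
  then have T: "0 \<le> T" "T \<le> e" "J = 0" by auto
  show "\<exists>\<tau>::nat \<Rightarrow> real. \<tau> 0 = 0 \<and> (\<forall>j\<le>J. \<tau> j \<le> \<tau> (Suc j)) \<and>
           {0..e} \<times> {0} \<inter> ({0..T} \<times> {0..J}) = (\<Union>j\<le>J. {\<tau> j..\<tau> (Suc j)} \<times> {j})"
    by (rule exI[of _ "\<lambda>i. if i = 0 then 0 else T"]) (use T in auto)
qed

lemma union_sol:
  fixes \<S> :: "((real\<times>nat) set \<times> (real\<times>nat \<Rightarrow> 'a::euclidean_space)) set"
  assumes ne: "\<S> \<noteq> {}"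
    and sol: "\<And>E \<phi>. (E,\<phi>)\<in>\<S> \<Longrightarrow> is_solution C F D G E \<phi>"
    and ch: "\<And>E1 \<phi>1 E2 \<phi>2. (E1,\<phi>1)\<in>\<S> \<Longrightarrow> (E2,\<phi>2)\<in>\<S> \<Longrightarrow> E1 \<subseteq> E2 \<or> E2 \<subseteq> E1"
    and ag: "\<And>E \<phi> s. (E,\<phi>)\<in>\<S> \<Longrightarrow> s\<in>E \<Longrightarrow> \<psi> s = \<phi> s"
  shows "is_solution C F D G (\<Union>(E,\<phi>)\<in>\<S>. E) \<psi>"
proof -
  define EU where "EU = (\<Union>(E,\<phi>)\<in>\<S>. E)"
  have mem: "\<And>s. s \<in> EU \<longleftrightarrow> (\<exists>E \<phi>. (E,\<phi>)\<in>\<S> \<and> s \<in> E)" unfolding EU_def by auto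
  have sub: "\<And>E \<phi>. (E,\<phi>)\<in>\<S> \<Longrightarrow> E \<subseteq> EU" using mem by blast
  have common: "\<And>s1 s2. s1 \<in> EU \<Longrightarrow> s2 \<in> EU \<Longrightarrow> \<exists>E \<phi>. (E,\<phi>)\<in>\<S> \<and> s1\<in>E \<and> s2\<in>E"
  proof -
    fix s1 s2 assume "s1 \<in> EU" "s2 \<in> EU"
    then obtain E1 \<phi>1 E2 \<phi>2 where a: "(E1,\<phi>1)\<in>\<S>" "s1\<in>E1" and b: "(E2,\<phi>2)\<in>\<S>" "s2\<in>E2" unfolding mem by blast
    show "\<exists>E \<phi>. (E,\<phi>)\<in>\<S> \<and> s1\<in>E \<and> s2\<in>E"
    proof (cases "E1 \<subseteq> E2")
      case True then show ?thesis using a b by blast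
    next
      case False then have "E2 \<subseteq> E1" using ch[OF a(1) b(1)] by blast
      then show ?thesis using a b by blast
    qed
  qed
  have htdm: "\<And>E \<phi>. (E,\<phi>)\<in>\<S> \<Longrightarrow> hybrid_time_domain E"
    by (rule sol_htd[OF sol])
  have htd: "hybrid_time_domain EU"
    unfolding hybrid_time_domain_def
  proof (intro conjI allI impI)
    show "EU \<subseteq> {0..} \<times> UNIV"
    proof (rule subrelI)
      fix s i assume "(s,i) \<in> EU"
      then obtain E \<phi> where "(E,\<phi>)\<in>\<S>" "(s,i)\<in>E" using mem by blast
      then show "(s,i) \<in> {0..} \<times> UNIV" using htd_nonneg[OF htdm] by auto
    qed
    fix T J assume "(T, J) \<in> EU"
    then obtain E0 \<phi>0 where E0: "(E0,\<phi>0)\<in>\<S>" "(T,J)\<in>E0" using mem by blast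
    have eq: "EU \<inter> ({0..T} \<times> {0..J}) = E0 \<inter> ({0..T} \<times> {0..J})"
    proof
      show "E0 \<inter> ({0..T} \<times> {0..J}) \<subseteq> EU \<inter> ({0..T} \<times> {0..J})" using sub[OF E0(1)] by blast
      show "EU \<inter> ({0..T} \<times> {0..J}) \<subseteq> E0 \<inter> ({0..T} \<times> {0..J})"
      proof
        fix x assume x: "x \<in> EU \<inter> ({0..T} \<times> {0..J})"
        obtain s i where si: "x = (s,i)" by fastforce
        from x si obtain E' \<phi>' where E': "(E',\<phi>')\<in>\<S>" "(s,i)\<in>E'" using mem by blast
        have "(s,i) \<in> E0"
        proof (cases "E' \<subseteq> E0")
          case True then show ?thesis using E' by blast
        next
          case False
          then have "E0 \<subseteq> E'" using ch[OF E0(1) E'(1)] by blast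
          then show ?thesis
            using htd_prefix[OF htdm[OF E0(1)] htdm[OF E'(1)] _ E0(2) E'(2)] x si by auto
        qed
        then show "x \<in> E0 \<inter> ({0..T} \<times> {0..J})" using x si by blast
      qed
    qed
    from htdm[OF E0(1)] have "\<forall>T J. (T,J)\<in>E0 \<longrightarrow> (\<exists>\<tau>::nat \<Rightarrow> real. \<tau> 0 = 0 \<and> (\<forall>j\<le>J. \<tau> j \<le> \<tau> (Suc j)) \<and>
           E0 \<inter> ({0..T} \<times> {0..J}) = (\<Union>j\<le>J. {\<tau> j..\<tau> (Suc j)} \<times> {j}))"
      by (simp add: hybrid_time_domain_def)
    then have "\<exists>\<tau>::nat \<Rightarrow> real. \<tau> 0 = 0 \<and> (\<forall>j\<le>J. \<tau> j \<le> \<tau> (Suc j)) \<and>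
           E0 \<inter> ({0..T} \<times> {0..J}) = (\<Union>j\<le>J. {\<tau> j..\<tau> (Suc j)} \<times> {j})"
      using E0(2) by blast
    then show "\<exists>\<tau>::nat \<Rightarrow> real. \<tau> 0 = 0 \<and> (\<forall>j\<le>J. \<tau> j \<le> \<tau> (Suc j)) \<and>
           EU \<inter> ({0..T} \<times> {0..J}) = (\<Union>j\<le>J. {\<tau> j..\<tau> (Suc j)} \<times> {j})"
      unfolding eq .
  qed
  have slconv: "\<And>E j a b. hybrid_time_domain E \<Longrightarrow> a \<in> tdom_slice E j \<Longrightarrow> b \<in> tdom_slice E j
      \<Longrightarrow> {a..b} \<subseteq> tdom_slice E j"
  proof
    fix E j a b s assume h: "hybrid_time_domain E" "a \<in> tdom_slice E j" "b \<in> tdom_slice E j" "s \<in> {a..b}"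
    then have "(s,j) \<in> E" using htd_interval[OF h(1), of a j b s] by (simp add: tdom_slice_def)
    then show "s \<in> tdom_slice E j" by (simp add: tdom_slice_def)
  qed
  have arc: "\<And>j. locally_absolutely_continuous_on (tdom_slice EU j) (\<lambda>t. \<psi> (t, j))"
    unfolding locally_absolutely_continuous_on_def
  proof (intro allI impI)
    fix j a b assume ab: "{a..b} \<subseteq> tdom_slice EU j"
    show "absolutely_continuous_fun_on {a..b} (\<lambda>t. \<psi> (t, j))"
    proof (cases "a \<le> b")
      case False then show ?thesis by (intro ac_subsingleton) auto
    next
      case True
      then have "(a,j) \<in> EU" "(b,j) \<in> EU" using ab by (auto simp: tdom_slice_def)
      then obtain E \<phi> where E: "(E,\<phi>)\<in>\<S>" "(a,j)\<in>E" "(b,j)\<in>E" using common by blast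
      have sab: "{a..b} \<subseteq> tdom_slice E j" using slconv[OF htdm[OF E(1)]] E by (simp add: tdom_slice_def)
      have "absolutely_continuous_fun_on {a..b} (\<lambda>t. \<phi> (t, j))"
        using sol_ac[OF sol[OF E(1)] sab] .
      then show ?thesis
        by (rule ac_cong) (use sab ag[OF E(1)] in \<open>auto simp: tdom_slice_def\<close>)
    qed
  qed
  have intm: "\<And>t j. t \<in> interior (tdom_slice EU j) \<Longrightarrow> \<exists>E \<phi>. (E,\<phi>)\<in>\<S> \<and> t \<in> interior (tdom_slice E j)"
  proof -
    fix t j assume t: "t \<in> interior (tdom_slice EU j)"
    then obtain e where e: "e > 0" "ball t e \<subseteq> interior (tdom_slice EU j)"
      by (meson open_contains_ball open_interior)
    have "t - e/2 \<in> ball t e" "t + e/2 \<in> ball t e" using e by (auto simp: dist_real_def)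
    then have "t - e/2 \<in> tdom_slice EU j" "t + e/2 \<in> tdom_slice EU j" using e interior_subset by blast+
    then have "(t - e/2, j) \<in> EU" "(t + e/2, j) \<in> EU" by (auto simp: tdom_slice_def)
    then obtain E \<phi> where E: "(E,\<phi>)\<in>\<S>" "(t - e/2,j)\<in>E" "(t + e/2,j)\<in>E" using common by blast
    have "{t - e/2..t + e/2} \<subseteq> tdom_slice E j" using slconv[OF htdm[OF E(1)]] E by (simp add: tdom_slice_def)
    then have "interior {t - e/2..t + e/2} \<subseteq> interior (tdom_slice E j)" by (rule interior_mono)
    moreover have "t \<in> interior {t - e/2..t + e/2}" using e by simp
    ultimately show "\<exists>E \<phi>. (E,\<phi>)\<in>\<S> \<and> t \<in> interior (tdom_slice E j)" using E(1) by blast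
  qed
  have good: "\<And>E \<phi> t j v. (E,\<phi>)\<in>\<S> \<Longrightarrow> t \<in> interior (tdom_slice E j) \<Longrightarrow>
      ((\<lambda>s. \<phi> (s, j)) has_vector_derivative v) (at t within tdom_slice E j) \<Longrightarrow>
      ((\<lambda>s. \<psi> (s, j)) has_vector_derivative v) (at t within tdom_slice EU j)"
  proof -
    fix E \<phi> t j v assume E: "(E,\<phi>)\<in>\<S>" and t: "t \<in> interior (tdom_slice E j)" and
      d: "((\<lambda>s. \<phi> (s, j)) has_vector_derivative v) (at t within tdom_slice E j)"
    from d have "((\<lambda>s. \<phi> (s, j)) has_vector_derivative v) (at t)" using at_within_interior[OF t] by simp
    then have "((\<lambda>s. \<psi> (s, j)) has_vector_derivative v) (at t)"
    proof (rule has_vector_derivative_transform_within_open[OF _ open_interior t])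
      fix y assume "y \<in> interior (tdom_slice E j)"
      then have "(y,j) \<in> E" using interior_subset by (force simp: tdom_slice_def)
      then show "\<phi> (y, j) = \<psi> (y, j)" using ag[OF E] by simp
    qed
    then show "((\<lambda>s. \<psi> (s, j)) has_vector_derivative v) (at t within tdom_slice EU j)"
      by (rule has_vector_derivative_at_within)
  qed
  show ?thesis
    unfolding EU_def[symmetric] is_solution_def
  proof (intro conjI allI impI ballI)
    show "hybrid_arc EU \<psi>" unfolding hybrid_arc_def using htd arc by blast
    obtain E0 \<phi>0 where E0: "(E0,\<phi>0)\<in>\<S>" using ne by auto
    then have "(0,0) \<in> E0" "\<phi>0 (0,0) \<in> closure C \<union> D" using sol_00[OF sol[OF E0]] sol_start[OF sol[OF E0]] by auto
    then show "(0,0) \<in> EU" "\<psi> (0,0) \<in> closure C \<union> D" using sub[OF E0] ag[OF E0] by auto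
  next
    fix j t assume "t \<in> interior (tdom_slice EU j)"
    then obtain E \<phi> where E: "(E,\<phi>)\<in>\<S>" "t \<in> interior (tdom_slice E j)" using intm by blast
    then have "\<phi> (t,j) \<in> C" using sol_int[OF sol[OF E(1)] E(2)] by blast
    moreover have "(t,j) \<in> E" using E(2) interior_subset by (force simp: tdom_slice_def)
    ultimately show "\<psi> (t, j) \<in> C" using ag[OF E(1)] by simp
  next
    fix t j assume "(t, j) \<in> EU \<and> (t, Suc j) \<in> EU"
    then obtain E \<phi> where E: "(E,\<phi>)\<in>\<S>" "(t,j)\<in>E" "(t,Suc j)\<in>E" using common by blast
    then show "\<psi> (t, j) \<in> D" "\<psi> (t, Suc j) \<in> G (\<psi> (t, j))"
      using sol_jump[OF sol[OF E(1)] E(2,3)] ag[OF E(1)] E by auto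
  next
    fix j
    define P where "P t \<longleftrightarrow> (t \<in> tdom_slice EU j \<longrightarrow>
           (\<exists>v. ((\<lambda>s. \<psi> (s, j)) has_vector_derivative v) (at t within tdom_slice EU j)
                \<and> v \<in> F (\<psi> (t, j))))" for t
    define \<F> where "\<F> = (\<lambda>(E,\<phi>). interior (tdom_slice E j)) ` \<S>"
    have opn: "\<And>S. S \<in> \<F> \<Longrightarrow> open S" unfolding \<F>_def by auto
    obtain \<F>' where F': "\<F>' \<subseteq> \<F>" "countable \<F>'" "\<Union>\<F>' = \<Union>\<F>"
      by (rule Lindelof[OF opn])
    have UF: "interior (tdom_slice EU j) \<subseteq> \<Union>\<F>"
    proof
      fix t assume "t \<in> interior (tdom_slice EU j)"
      then obtain E \<phi> where "(E,\<phi>)\<in>\<S>" "t \<in> interior (tdom_slice E j)" using intm by blast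
      moreover have "interior (tdom_slice E j) \<in> \<F>" using calculation(1) unfolding \<F>_def by force
      ultimately show "t \<in> \<Union>\<F>" by blast
    qed
    have exN: "\<forall>Ob\<in>\<F>'. \<exists>N. N \<in> null_sets lebesgue \<and> {t\<in>Ob. \<not> P t} \<subseteq> N"
    proof
      fix Ob assume "Ob \<in> \<F>'"
      then obtain E \<phi> where E: "(E,\<phi>)\<in>\<S>" and Ob: "Ob = interior (tdom_slice E j)"
        using F'(1) unfolding \<F>_def by auto
      show "\<exists>N. N \<in> null_sets lebesgue \<and> {t\<in>Ob. \<not> P t} \<subseteq> N"
      proof (cases "Ob = {}")
        case True then show ?thesis by (intro exI[of _ "{}"]) auto
      next
        case False
        then have "AE t in lebesgue. t \<in> tdom_slice E j \<longrightarrow>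
           (\<exists>v. ((\<lambda>s. \<phi> (s, j)) has_vector_derivative v) (at t within tdom_slice E j)
                \<and> v \<in> F (\<phi> (t, j)))" using sol_ae[OF sol[OF E]] Ob by blast
        then obtain N where N: "N \<in> null_sets lebesgue" and NN: "{t \<in> space lebesgue. \<not> (t \<in> tdom_slice E j \<longrightarrow>
           (\<exists>v. ((\<lambda>s. \<phi> (s, j)) has_vector_derivative v) (at t within tdom_slice E j)
                \<and> v \<in> F (\<phi> (t, j))))} \<subseteq> N" unfolding eventually_ae_filter by blast
        have "{t\<in>Ob. \<not> P t} \<subseteq> N"
        proof
          fix t assume t: "t \<in> {t\<in>Ob. \<not> P t}"
          then have tO: "t \<in> interior (tdom_slice E j)" using Ob by simp
          then have tE: "t \<in> tdom_slice E j" using interior_subset by blast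
          then have eq: "\<psi> (t,j) = \<phi> (t,j)" using ag[OF E] by (simp add: tdom_slice_def)
          have "\<not> (\<exists>v. ((\<lambda>s. \<phi> (s, j)) has_vector_derivative v) (at t within tdom_slice E j)
                \<and> v \<in> F (\<phi> (t, j)))"
          proof
            assume "\<exists>v. ((\<lambda>s. \<phi> (s, j)) has_vector_derivative v) (at t within tdom_slice E j)
                \<and> v \<in> F (\<phi> (t, j))"
            then obtain v where v: "((\<lambda>s. \<phi> (s, j)) has_vector_derivative v) (at t within tdom_slice E j)"
               "v \<in> F (\<phi> (t, j))" by blast
            have "P t" unfolding P_def using good[OF E tO v(1)] v(2) eq by auto
            then show False using t by simp
          qed
          then show "t \<in> N" using NN tE by auto
        qed
        then show ?thesis using N by blast
      qed
    qed
    then obtain Nf where Nf: "\<forall>Ob\<in>\<F>'. Nf Ob \<in> null_sets lebesgue \<and> {t\<in>Ob. \<not> P t} \<subseteq> Nf Ob"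
      using bchoice[OF exN] by blast
    have conv: "convex (tdom_slice EU j)"
      unfolding is_interval_convex_1[symmetric] is_interval_1
      using slconv[OF htd] by (meson atLeastAtMost_iff subsetD)
    have fr: "frontier (tdom_slice EU j) \<in> null_sets lebesgue"
      using negligible_convex_frontier[OF conv] by (simp add: negligible_iff_null_sets)
    have NU: "(\<Union>Ob\<in>\<F>'. Nf Ob) \<union> frontier (tdom_slice EU j) \<in> null_sets lebesgue"
    proof -
      have "(\<Union>Ob\<in>\<F>'. Nf Ob) \<in> null_sets lebesgue"
        by (rule null_sets_UN'[OF F'(2)]) (use Nf in blast)
      then show ?thesis using fr by (rule null_sets.Un)
    qed
    have "{t \<in> space lebesgue. \<not> P t} \<subseteq> (\<Union>Ob\<in>\<F>'. Nf Ob) \<union> frontier (tdom_slice EU j)"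
    proof
      fix t assume t: "t \<in> {t \<in> space lebesgue. \<not> P t}"
      then have ts: "t \<in> tdom_slice EU j" unfolding P_def by blast
      show "t \<in> (\<Union>Ob\<in>\<F>'. Nf Ob) \<union> frontier (tdom_slice EU j)"
      proof (cases "t \<in> interior (tdom_slice EU j)")
        case True
        then obtain Ob where "Ob \<in> \<F>'" "t \<in> Ob" using UF F'(3) by blast
        then show ?thesis using Nf t by blast
      next
        case False
        then show ?thesis using ts closure_subset unfolding frontier_def by blast
      qed
    qed
    then show "AE t in lebesgue. t \<in> tdom_slice EU j \<longrightarrow>
           (\<exists>v. ((\<lambda>s. \<psi> (s, j)) has_vector_derivative v) (at t within tdom_slice EU j)
                \<and> v \<in> F (\<psi> (t, j)))"
      unfolding eventually_ae_filter using NU unfolding P_def by blast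
  qed
qed

lemma ac_shift:
  assumes "absolutely_continuous_fun_on {c+lo..c+hi} f"
  shows "absolutely_continuous_fun_on {lo..hi} (\<lambda>u. f (c+u))"
  unfolding absolutely_continuous_fun_on_def
proof (intro allI impI)
  fix \<epsilon> :: real assume "\<epsilon> > 0"
  with assms obtain \<delta> where d: "\<delta>>0" and H: "\<forall>(n::nat) (a::nat \<Rightarrow> real) b.
        (\<forall>k<n. a k \<le> b k \<and> {a k..b k} \<subseteq> {c+lo..c+hi}) \<and>
        disjoint_family_on (\<lambda>k. {a k<..<b k}) {..<n} \<and>
        (\<Sum>k<n. b k - a k) < \<delta> \<longrightarrow>
        (\<Sum>k<n. norm (f (b k) - f (a k))) < \<epsilon>"
    unfolding absolutely_continuous_fun_on_def by blast
  show "\<exists>\<delta>>0. \<forall>(n::nat) (a'::nat \<Rightarrow> real) b'.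
        (\<forall>k<n. a' k \<le> b' k \<and> {a' k..b' k} \<subseteq> {lo..hi}) \<and>
        disjoint_family_on (\<lambda>k. {a' k<..<b' k}) {..<n} \<and>
        (\<Sum>k<n. b' k - a' k) < \<delta> \<longrightarrow>
        (\<Sum>k<n. norm (f (c + b' k) - f (c + a' k))) < \<epsilon>"
  proof (intro exI[of _ \<delta>] conjI allI impI)
    fix n :: nat and a' b' :: "nat \<Rightarrow> real"
    assume h: "(\<forall>k<n. a' k \<le> b' k \<and> {a' k..b' k} \<subseteq> {lo..hi}) \<and>
        disjoint_family_on (\<lambda>k. {a' k<..<b' k}) {..<n} \<and> (\<Sum>k<n. b' k - a' k) < \<delta>"
    have 1: "\<forall>k<n. c + a' k \<le> c + b' k \<and> {c + a' k..c + b' k} \<subseteq> {c+lo..c+hi}"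
    proof (intro allI impI conjI)
      fix k assume "k < n"
      with h have "a' k \<le> b' k" "{a' k..b' k} \<subseteq> {lo..hi}" by auto
      then show "c + a' k \<le> c + b' k" "{c + a' k..c + b' k} \<subseteq> {c+lo..c+hi}" by auto
    qed
    have 2: "disjoint_family_on (\<lambda>k. {c + a' k<..<c + b' k}) {..<n}"
      unfolding disjoint_family_on_def
    proof (intro ballI impI)
      fix m k assume mk: "m \<in> {..<n}" "k \<in> {..<n}" "m \<noteq> k"
      have "{a' m<..<b' m} \<inter> {a' k<..<b' k} = {}" using h mk unfolding disjoint_family_on_def by blast
      show "{c + a' m<..<c + b' m} \<inter> {c + a' k<..<c + b' k} = {}"
      proof (rule ccontr)
        assume "{c + a' m<..<c + b' m} \<inter> {c + a' k<..<c + b' k} \<noteq> {}"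
        then obtain x where x: "x \<in> {c + a' m<..<c + b' m}" "x \<in> {c + a' k<..<c + b' k}" by blast
        then have "x - c \<in> {a' m<..<b' m} \<inter> {a' k<..<b' k}" by auto
        with \<open>{a' m<..<b' m} \<inter> {a' k<..<b' k} = {}\<close> show False by blast
      qed
    qed
    have 3: "(\<Sum>k<n. (c + b' k) - (c + a' k)) < \<delta>" using h by simp
    have "(\<Sum>k<n. norm (f ((\<lambda>k. c + b' k) k) - f ((\<lambda>k. c + a' k) k))) < \<epsilon>"
      using H[rule_format, of n "\<lambda>k. c + a' k" "\<lambda>k. c + b' k"] 1 2 3 by blast
    then show "(\<Sum>k<n. norm (f (c + b' k) - f (c + a' k))) < \<epsilon>" by simp
  qed (rule d)
qed

lemma noflow:
  assumes nb: "\<not> (\<exists>x\<in>C. \<exists>E \<phi> \<epsilon>. is_solution C F D G E \<phi> \<and> \<phi> (0, 0) = x \<and> \<epsilon> > 0 \<and>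
              {0..<\<epsilon>} \<times> {0} \<subseteq> E)"
    and sol: "is_solution C F D G E \<phi>"
  shows "interior (tdom_slice E j) = {}"
proof (rule ccontr)
  assume ne: "interior (tdom_slice E j) \<noteq> {}"
  then obtain t where t: "t \<in> interior (tdom_slice E j)" by blast
  then obtain e where e: "e > 0" "ball t e \<subseteq> interior (tdom_slice E j)"
    by (meson open_contains_ball open_interior)
  define e' where "e' = e/2"
  have e'0: "e' > 0" using e by (simp add: e'_def)
  have "{t..t+e'} \<subseteq> ball t e" using e by (auto simp: e'_def dist_real_def)
  then have seg: "{t..t+e'} \<subseteq> interior (tdom_slice E j)"
    using e(2) by blast
  have seg2: "\<And>u. u \<in> {0..e'} \<Longrightarrow> t + u \<in> interior (tdom_slice E j)"
    using seg by (simp add: subset_eq)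
  have segE: "\<And>u. u \<in> {0..e'} \<Longrightarrow> (t+u, j) \<in> E"
  proof -
    fix u assume "u \<in> {0..e'}"
    then have "t + u \<in> tdom_slice E j" using seg2 interior_subset by blast
    then show "(t+u, j) \<in> E" by (simp add: tdom_slice_def)
  qed
  have Cin: "\<And>s. s \<in> interior (tdom_slice E j) \<Longrightarrow> \<phi> (s,j) \<in> C"
    using sol_int[OF sol] by blast
  define E' where "E' = {0..e'} \<times> {0::nat}"
  define \<psi> where "\<psi> = (\<lambda>s::real\<times>nat. \<phi> (t + fst s, j))"
  have sl: "\<And>i. tdom_slice E' i = (if i = 0 then {0..e'} else {})"
    by (auto simp: tdom_slice_def E'_def)
  have htd: "hybrid_time_domain E'" unfolding E'_def using htd_flow e'0 by simp
  have arc: "hybrid_arc E' \<psi>"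
    unfolding hybrid_arc_def locally_absolutely_continuous_on_def
  proof (intro conjI htd allI impI)
    fix i a b assume ab: "{a..b} \<subseteq> tdom_slice E' i"
    show "absolutely_continuous_fun_on {a..b} (\<lambda>s. \<psi> (s, i))"
    proof (cases "a \<le> b")
      case False then show ?thesis by (intro ac_subsingleton) auto
    next
      case True
      then have "a \<in> tdom_slice E' i" using ab by auto
      then have i0: "i = 0" using sl[of i] by (simp split: if_splits)
      then have ab': "{a..b} \<subseteq> {0..e'}" using ab sl[of i] by simp
      have "{t+a..t+b} \<subseteq> tdom_slice E j"
      proof
        fix x assume "x \<in> {t+a..t+b}"
        then have "x - t \<in> {0..e'}" using ab' True by auto
        from segE[OF this] show "x \<in> tdom_slice E j" by (simp add: tdom_slice_def)
      qed
      then have "absolutely_continuous_fun_on {t+a..t+b} (\<lambda>s. \<phi> (s, j))"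
        using sol_ac[OF sol] by blast
      from ac_shift[OF this] show ?thesis by (simp add: \<psi>_def)
    qed
  qed
  have solE': "is_solution C F D G E' \<psi>"
    unfolding is_solution_def
  proof (intro conjI allI impI ballI arc)
    show "(0,0) \<in> E'" using e'0 by (simp add: E'_def)
    have "\<psi> (0,0) \<in> C" using Cin[OF t] by (simp add: \<psi>_def)
    then show "\<psi> (0,0) \<in> closure C \<union> D" using closure_subset by blast
  next
    fix i u assume "u \<in> interior (tdom_slice E' i)"
    then have "u \<in> tdom_slice E' i" using interior_subset by blast
    then have "i = 0" "u \<in> {0..e'}" using sl[of i] by (simp_all split: if_splits)
    then show "\<psi> (u, i) \<in> C" using Cin[OF seg2] by (simp add: \<psi>_def)
  next
    fix u i assume "(u, i) \<in> E' \<and> (u, Suc i) \<in> E'"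
    then show "\<psi> (u, i) \<in> D" by (simp add: E'_def)
  next
    fix u i assume "(u, i) \<in> E' \<and> (u, Suc i) \<in> E'"
    then show "\<psi> (u, Suc i) \<in> G (\<psi> (u, i))" by (simp add: E'_def)
  next
    fix i
    show "AE u in lebesgue. u \<in> tdom_slice E' i \<longrightarrow>
           (\<exists>v. ((\<lambda>s. \<psi> (s, i)) has_vector_derivative v) (at u within tdom_slice E' i)
                \<and> v \<in> F (\<psi> (u, i)))"
    proof (cases "i = 0")
      case False then show ?thesis using sl[of i] by simp
    next
      case True
      have "AE t in lebesgue. t \<in> tdom_slice E j \<longrightarrow>
           (\<exists>v. ((\<lambda>s. \<phi> (s, j)) has_vector_derivative v) (at t within tdom_slice E j)
                \<and> v \<in> F (\<phi> (t, j)))" using sol_ae[OF sol ne] by blast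
      then obtain N where N: "N \<in> null_sets lebesgue" and NN: "{s \<in> space lebesgue. \<not> (s \<in> tdom_slice E j \<longrightarrow>
           (\<exists>v. ((\<lambda>s. \<phi> (s, j)) has_vector_derivative v) (at s within tdom_slice E j)
                \<and> v \<in> F (\<phi> (s, j))))} \<subseteq> N" unfolding eventually_ae_filter by blast
      have "negligible N" using N by (simp add: negligible_iff_null_sets)
      then have "negligible ((+) (-t) ` N)" by (rule negligible_translation)
      then have N': "(+) (-t) ` N \<in> null_sets lebesgue" by (simp add: negligible_iff_null_sets)
      have "{u \<in> space lebesgue. \<not> (u \<in> tdom_slice E' i \<longrightarrow>
           (\<exists>v. ((\<lambda>s. \<psi> (s, i)) has_vector_derivative v) (at u within tdom_slice E' i)
                \<and> v \<in> F (\<psi> (u, i))))} \<subseteq> (+) (-t) ` N"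
      proof
        fix u assume u: "u \<in> {u \<in> space lebesgue. \<not> (u \<in> tdom_slice E' i \<longrightarrow>
           (\<exists>v. ((\<lambda>s. \<psi> (s, i)) has_vector_derivative v) (at u within tdom_slice E' i)
                \<and> v \<in> F (\<psi> (u, i))))}"
        then have u0: "u \<in> {0..e'}" using sl True by simp
        have "t + u \<in> N"
        proof (rule ccontr)
          assume "t + u \<notin> N"
          moreover have "t + u \<in> tdom_slice E j" using segE[OF u0] by (simp add: tdom_slice_def)
          ultimately obtain v where v: "((\<lambda>s. \<phi> (s, j)) has_vector_derivative v) (at (t+u) within tdom_slice E j)"
             "v \<in> F (\<phi> (t+u, j))" using NN by auto
          have va: "((\<lambda>s. \<phi> (s, j)) has_vector_derivative v) (at (t+u))"
            using v(1) at_within_interior[OF seg2[OF u0]] by simp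
          have sh: "((\<lambda>s. t + s) has_vector_derivative 1) (at u)"
            by (auto intro!: derivative_eq_intros)
          have "(((\<lambda>s. \<phi> (s, j)) \<circ> (\<lambda>s. t + s)) has_vector_derivative (1 *\<^sub>R v)) (at u)"
            by (rule vector_diff_chain_at[OF sh]) (use va in simp)
          then have "((\<lambda>s. \<psi> (s, i)) has_vector_derivative v) (at u)"
            by (simp add: \<psi>_def o_def)
          then have "((\<lambda>s. \<psi> (s, i)) has_vector_derivative v) (at u within tdom_slice E' i)"
            by (rule has_vector_derivative_at_within)
          moreover have "v \<in> F (\<psi> (u, i))" using v(2) by (simp add: \<psi>_def)
          ultimately have "\<exists>v. ((\<lambda>s. \<psi> (s, i)) has_vector_derivative v) (at u within tdom_slice E' i)
                \<and> v \<in> F (\<psi> (u, i))" by blast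
          with u show False by blast
        qed
        then show "u \<in> (+) (-t) ` N" by (rule rev_image_eqI) simp
      qed
      then show ?thesis unfolding eventually_ae_filter using N' by blast
    qed
  qed
  have "{0..<e'} \<times> {0} \<subseteq> E'" by (auto simp: E'_def)
  moreover have "\<psi> (0,0) \<in> C" using Cin[OF t] by (simp add: \<psi>_def)
  ultimately show False using nb solE' e'0 by blast
qed

lemma extend_max:
  assumes sol0: "is_solution C F D G E0 \<phi>0"
  shows "\<exists>E \<phi>. maximal_solution C F D G E \<phi> \<and> E0 \<subseteq> E \<and> (\<forall>s\<in>E0. \<phi> s = \<phi>0 s)"
proof -
  define gr :: "(real \<times> nat) set \<Rightarrow> (real \<times> nat \<Rightarrow> 'a) \<Rightarrow> ((real \<times> nat) \<times> 'a) set"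
    where "gr E \<phi> = (\<lambda>s. (s, \<phi> s)) ` E" for E \<phi>
  have grmem: "\<And>s v E \<phi>. (s,v) \<in> gr E \<phi> \<longleftrightarrow> s \<in> E \<and> v = \<phi> s" unfolding gr_def by auto
  have grsub: "\<And>E \<phi> E' \<phi>'. gr E \<phi> \<subseteq> gr E' \<phi>' \<longleftrightarrow> E \<subseteq> E' \<and> (\<forall>s\<in>E. \<phi> s = \<phi>' s)"
    unfolding gr_def by auto
  have grfst: "\<And>E \<phi>. fst ` gr E \<phi> = E" unfolding gr_def by force
  define A where "A = {\<Gamma>. \<exists>E \<phi>. is_solution C F D G E \<phi> \<and> \<Gamma> = gr E \<phi> \<and> gr E0 \<phi>0 \<subseteq> \<Gamma>}"
  have A0: "gr E0 \<phi>0 \<in> A" unfolding A_def using sol0 by blast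
  have "\<forall>\<C>\<in>chains A. \<exists>U\<in>A. \<forall>X\<in>\<C>. X \<subseteq> U"
  proof
    fix \<C> assume C: "\<C> \<in> chains A"
    then have CA: "\<C> \<subseteq> A" and cch: "\<And>X Y. X \<in> \<C> \<Longrightarrow> Y \<in> \<C> \<Longrightarrow> X \<subseteq> Y \<or> Y \<subseteq> X"
      unfolding chains_def chain_subset_def by auto
    show "\<exists>U\<in>A. \<forall>X\<in>\<C>. X \<subseteq> U"
    proof (cases "\<C> = {}")
      case True then show ?thesis using A0 by blast
    next
      case False
      define \<S> where "\<S> = {(E,\<phi>). is_solution C F D G E \<phi> \<and> gr E \<phi> \<in> \<C>}"
      define \<psi> where "\<psi> s = (SOME v. (s,v) \<in> \<Union>\<C>)" for s
      have Arep: "\<And>\<Gamma>. \<Gamma> \<in> \<C> \<Longrightarrow> \<exists>E \<phi>. (E,\<phi>) \<in> \<S> \<and> \<Gamma> = gr E \<phi>"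
      proof -
        fix \<Gamma> assume G: "\<Gamma> \<in> \<C>"
        then have "\<Gamma> \<in> A" using CA by blast
        then obtain E \<phi> where "is_solution C F D G E \<phi>" "\<Gamma> = gr E \<phi>" unfolding A_def by blast
        then show "\<exists>E \<phi>. (E,\<phi>) \<in> \<S> \<and> \<Gamma> = gr E \<phi>" using G unfolding \<S>_def by blast
      qed
      have uniq: "\<And>s v w. (s,v) \<in> \<Union>\<C> \<Longrightarrow> (s,w) \<in> \<Union>\<C> \<Longrightarrow> v = w"
      proof -
        fix s v w assume "(s,v) \<in> \<Union>\<C>" "(s,w) \<in> \<Union>\<C>"
        then obtain X Y where XY: "X \<in> \<C>" "Y \<in> \<C>" "(s,v) \<in> X" "(s,w) \<in> Y" by blast
        have "\<exists>Z\<in>\<C>. (s,v) \<in> Z \<and> (s,w) \<in> Z" using cch[OF XY(1,2)] XY by blast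
        then obtain Z where Z: "Z \<in> \<C>" "(s,v) \<in> Z" "(s,w) \<in> Z" by blast
        then obtain E \<phi> where "Z = gr E \<phi>" using Arep by blast
        then show "v = w" using Z grmem by simp
      qed
      have ag: "\<And>E \<phi> s. (E,\<phi>)\<in>\<S> \<Longrightarrow> s\<in>E \<Longrightarrow> \<psi> s = \<phi> s"
      proof -
        fix E \<phi> s assume "(E,\<phi>)\<in>\<S>" "s\<in>E"
        then have in1: "(s, \<phi> s) \<in> \<Union>\<C>" unfolding \<S>_def using grmem by blast
        then have "(s, \<psi> s) \<in> \<Union>\<C>" unfolding \<psi>_def by (rule someI)
        then show "\<psi> s = \<phi> s" using uniq in1 by blast
      qed
      have Sne: "\<S> \<noteq> {}" using False Arep by blast
      have Ssol: "\<And>E \<phi>. (E,\<phi>)\<in>\<S> \<Longrightarrow> is_solution C F D G E \<phi>" unfolding \<S>_def by blast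
      have Sch: "\<And>E1 \<phi>1 E2 \<phi>2. (E1,\<phi>1)\<in>\<S> \<Longrightarrow> (E2,\<phi>2)\<in>\<S> \<Longrightarrow> E1 \<subseteq> E2 \<or> E2 \<subseteq> E1"
      proof -
        fix E1 \<phi>1 E2 \<phi>2 assume "(E1,\<phi>1)\<in>\<S>" "(E2,\<phi>2)\<in>\<S>"
        then have "gr E1 \<phi>1 \<in> \<C>" "gr E2 \<phi>2 \<in> \<C>" unfolding \<S>_def by auto
        then have "gr E1 \<phi>1 \<subseteq> gr E2 \<phi>2 \<or> gr E2 \<phi>2 \<subseteq> gr E1 \<phi>1" using cch by blast
        then show "E1 \<subseteq> E2 \<or> E2 \<subseteq> E1" using grsub by blast
      qed
      define EU where "EU = (\<Union>(E,\<phi>)\<in>\<S>. E)"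
      have solU: "is_solution C F D G EU \<psi>"
        unfolding EU_def
        apply (rule union_sol)
           apply (rule Sne)
          apply (erule Ssol)
         apply (erule (1) Sch)
        apply (erule (1) ag)
        done
      have eqU: "\<Union>\<C> = gr EU \<psi>"
      proof
        show "\<Union>\<C> \<subseteq> gr EU \<psi>"
        proof (rule subrelI)
          fix s v assume sv: "(s,v) \<in> \<Union>\<C>"
          then obtain \<Gamma> where "\<Gamma> \<in> \<C>" "(s,v) \<in> \<Gamma>" by blast
          then obtain E \<phi> where E: "(E,\<phi>) \<in> \<S>" "\<Gamma> = gr E \<phi>" using Arep by blast
          then have sE: "s \<in> E" and vs: "v = \<phi> s" using \<open>(s,v) \<in> \<Gamma>\<close> grmem by auto
          have "s \<in> EU" using E(1) sE unfolding EU_def by blast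
          moreover have "v = \<psi> s" using ag[OF E(1) sE] vs by simp
          ultimately show "(s,v) \<in> gr EU \<psi>" by (simp add: grmem)
        qed
        show "gr EU \<psi> \<subseteq> \<Union>\<C>"
        proof (rule subrelI)
          fix s v assume "(s,v) \<in> gr EU \<psi>"
          then have "s \<in> EU" "v = \<psi> s" using grmem by auto
          then obtain E \<phi> where E: "(E,\<phi>) \<in> \<S>" "s \<in> E" unfolding EU_def by blast
          then have "v = \<phi> s" using ag \<open>v = \<psi> s\<close> by simp
          then have "(s,v) \<in> gr E \<phi>" using E grmem by simp
          moreover have "gr E \<phi> \<in> \<C>" using E(1) unfolding \<S>_def by simp
          ultimately show "(s,v) \<in> \<Union>\<C>" by blast
        qed
      qed
      have "gr E0 \<phi>0 \<subseteq> \<Union>\<C>"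
      proof -
        obtain \<Gamma> where "\<Gamma> \<in> \<C>" using False by blast
        then have "gr E0 \<phi>0 \<subseteq> \<Gamma>" using CA unfolding A_def by blast
        then show ?thesis using \<open>\<Gamma> \<in> \<C>\<close> by blast
      qed
      then have "\<Union>\<C> \<in> A" unfolding A_def using solU eqU by blast
      then show ?thesis by blast
    qed
  qed
  from Zorn_Lemma2[OF this] obtain M where M: "M \<in> A" and Mmax: "\<forall>X\<in>A. M \<subseteq> X \<longrightarrow> X = M" by blast
  then obtain E \<phi> where sol: "is_solution C F D G E \<phi>" and ME: "M = gr E \<phi>" and M0: "gr E0 \<phi>0 \<subseteq> M"
    unfolding A_def by blast
  have "maximal_solution C F D G E \<phi>"
    unfolding maximal_solution_def
  proof (intro conjI sol notI)
    assume "\<exists>E' \<psi>. is_solution C F D G E' \<psi> \<and> E \<subset> E' \<and> (\<forall>s\<in>E. \<psi> s = \<phi> s)"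
    then obtain E' \<psi> where E': "is_solution C F D G E' \<psi>" "E \<subset> E'" "\<forall>s\<in>E. \<psi> s = \<phi> s" by blast
    have sub: "gr E \<phi> \<subseteq> gr E' \<psi>" using E'(2,3) grsub by auto
    then have "gr E' \<psi> \<in> A" unfolding A_def using E'(1) M0 ME by blast
    then have "gr E' \<psi> = gr E \<phi>" using Mmax sub ME by blast
    then have "E' = E" using grfst by metis
    then show False using E'(2) by blast
  qed
  moreover have "E0 \<subseteq> E \<and> (\<forall>s\<in>E0. \<phi> s = \<phi>0 s)" using M0 ME grsub by auto
  ultimately show ?thesis by blast
qed

lemma sol_discrete:
  assumes st: "\<phi> (0,0) \<in> closure C \<union> D"
    and jp: "\<And>j. Suc j \<le> n \<Longrightarrow> \<phi> (0,j) \<in> D \<and> \<phi> (0,Suc j) \<in> G (\<phi> (0,j))"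
  shows "is_solution C F D G ({0}\<times>{..n}) \<phi>"
proof -
  define E where "E = ({0::real}\<times>{..n})"
  have htd: "hybrid_time_domain E" unfolding E_def by (rule htd_discrete) auto
  have sl: "\<And>j. tdom_slice E j = (if j \<le> n then {0} else {})"
    by (auto simp: tdom_slice_def E_def)
  have ni: "\<And>j. interior (tdom_slice E j) = {}" by (simp add: sl)
  have arc: "hybrid_arc E \<phi>"
    unfolding hybrid_arc_def locally_absolutely_continuous_on_def
  proof (intro conjI htd allI impI)
    fix j a b assume ab: "{a..b} \<subseteq> tdom_slice E j"
    have "\<forall>x\<in>{a..b}. \<forall>y\<in>{a..b}. x = y"
    proof (intro ballI)
      fix x y assume "x \<in> {a..b}" "y \<in> {a..b}"
      then have "x \<in> tdom_slice E j" "y \<in> tdom_slice E j" using ab by auto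
      then show "x = y" by (simp add: sl split: if_splits)
    qed
    then show "absolutely_continuous_fun_on {a..b} (\<lambda>t. \<phi> (t, j))" by (rule ac_subsingleton)
  qed
  have "is_solution C F D G E \<phi>"
    unfolding is_solution_def
  proof (intro conjI allI impI ballI arc)
    show "(0,0) \<in> E" by (simp add: E_def)
    show "\<phi> (0,0) \<in> closure C \<union> D" by (rule st)
  next
    fix j t assume "interior (tdom_slice E j) \<noteq> {}" then show "\<phi> (t, j) \<in> C" using ni by simp
  next
    fix j assume "interior (tdom_slice E j) \<noteq> {}"
    then show "AE t in lebesgue. t \<in> tdom_slice E j \<longrightarrow>
           (\<exists>v. ((\<lambda>s. \<phi> (s, j)) has_vector_derivative v) (at t within tdom_slice E j)
                \<and> v \<in> F (\<phi> (t, j)))" using ni by simp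
  next
    fix t j assume "(t, j) \<in> E \<and> (t, Suc j) \<in> E"
    then have "t = 0" "Suc j \<le> n" by (auto simp: E_def)
    then show "\<phi> (t, j) \<in> D" "\<phi> (t, Suc j) \<in> G (\<phi> (t, j))" using jp by auto
  qed
  then show ?thesis by (simp add: E_def)
qed

theorem proposition4:
  fixes X C D :: "'a::euclidean_space set"
    and F G :: "'a \<Rightarrow> 'a set"
    and p :: "'a \<Rightarrow> bool"
    and K :: "'a set"
  assumes H: "hybrid_system X C F D G"
    and K_def: "K = {x \<in> X. p x}"
    and K_ne: "K \<noteq> {}"
  shows "(\<forall>E \<phi>. maximal_solution C F D G E \<phi> \<longrightarrow> (\<forall>s\<in>E. models_next E \<phi> s p))
     \<longleftrightarrow>
     ((\<forall>E \<phi>. nontrivial_solution C F D G E \<phi> \<longrightarrow> \<phi> (0, 0) \<in> D) \<and>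
      (\<not> (\<exists>x\<in>C. \<exists>E \<phi> \<epsilon>. is_solution C F D G E \<phi> \<and> \<phi> (0, 0) = x \<and> \<epsilon> > 0 \<and>
              {0..<\<epsilon>} \<times> {0} \<subseteq> E)) \<and>
      sv_image G D \<subseteq> K \<inter> D \<and>
      closure C \<subseteq> D)"
proof
  assume L: "\<forall>E \<phi>. maximal_solution C F D G E \<phi> \<longrightarrow> (\<forall>s\<in>E. models_next E \<phi> s p)"
  have ext: "\<And>E0 \<phi>0. is_solution C F D G E0 \<phi>0 \<Longrightarrow> \<exists>E \<phi>. is_solution C F D G E \<phi> \<and>
      (\<forall>s\<in>E. (fst s, Suc (snd s)) \<in> E \<and> p (\<phi> (fst s, Suc (snd s)))) \<and> E0 \<subseteq> E \<and> (\<forall>s\<in>E0. \<phi> s = \<phi>0 s)"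
  proof -
    fix E0 \<phi>0 assume "is_solution C F D G E0 \<phi>0"
    from extend_max[OF this] obtain E \<phi> where M: "maximal_solution C F D G E \<phi>" "E0 \<subseteq> E" "\<forall>s\<in>E0. \<phi> s = \<phi>0 s"
      by blast
    have "is_solution C F D G E \<phi>" using M(1) by (simp add: maximal_solution_def)
    moreover have "\<forall>s\<in>E. (fst s, Suc (snd s)) \<in> E \<and> p (\<phi> (fst s, Suc (snd s)))"
      using L M(1) unfolding models_next_def by blast
    ultimately show "?thesis E0 \<phi>0" using M by blast
  qed
  show "(\<forall>E \<phi>. nontrivial_solution C F D G E \<phi> \<longrightarrow> \<phi> (0, 0) \<in> D) \<and>
      (\<not> (\<exists>x\<in>C. \<exists>E \<phi> \<epsilon>. is_solution C F D G E \<phi> \<and> \<phi> (0, 0) = x \<and> \<epsilon> > 0 \<and>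
              {0..<\<epsilon>} \<times> {0} \<subseteq> E)) \<and>
      sv_image G D \<subseteq> K \<inter> D \<and>
      closure C \<subseteq> D"
  proof (intro conjI allI impI)
    fix E0 \<phi>0 assume "nontrivial_solution C F D G E0 \<phi>0"
    then have s0: "is_solution C F D G E0 \<phi>0" by (simp add: nontrivial_solution_def)
    from ext[OF s0] obtain E \<phi> where E: "is_solution C F D G E \<phi>"
      "\<forall>s\<in>E. (fst s, Suc (snd s)) \<in> E \<and> p (\<phi> (fst s, Suc (snd s)))" "E0 \<subseteq> E" "\<forall>s\<in>E0. \<phi> s = \<phi>0 s"
      by blast
    have "(0,0) \<in> E0" using sol_00[OF s0] .
    then have "(0,0) \<in> E" using E(3) by blast
    then have "(0, Suc 0) \<in> E" using bspec[OF E(2) \<open>(0,0) \<in> E\<close>] by simp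
    then have "\<phi> (0,0) \<in> D" using sol_jump[OF E(1) \<open>(0,0) \<in> E\<close>] by blast
    then show "\<phi>0 (0,0) \<in> D" using E(4) \<open>(0,0) \<in> E0\<close> by simp
  next
    show "\<not> (\<exists>x\<in>C. \<exists>E \<phi> \<epsilon>. is_solution C F D G E \<phi> \<and> \<phi> (0, 0) = x \<and> \<epsilon> > 0 \<and>
              {0..<\<epsilon>} \<times> {0} \<subseteq> E)"
    proof
      assume "\<exists>x\<in>C. \<exists>E \<phi> \<epsilon>. is_solution C F D G E \<phi> \<and> \<phi> (0, 0) = x \<and> \<epsilon> > 0 \<and>
              {0..<\<epsilon>} \<times> {0} \<subseteq> E"
      then obtain E0 \<phi>0 \<epsilon> where s0: "is_solution C F D G E0 \<phi>0" and ep: "\<epsilon> > 0" and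
        sub: "{0..<\<epsilon>} \<times> {0} \<subseteq> E0" by blast
      from ext[OF s0] obtain E \<phi> where E: "is_solution C F D G E \<phi>"
        "\<forall>s\<in>E. (fst s, Suc (snd s)) \<in> E \<and> p (\<phi> (fst s, Suc (snd s)))" "E0 \<subseteq> E"
        by blast
      have "(0,0) \<in> E" using sol_00[OF E(1)] .
      then have a: "(0, Suc 0) \<in> E" using E(2) by auto
      have "(\<epsilon>/2, 0) \<in> E0" using sub ep by auto
      then have b: "(\<epsilon>/2, 0) \<in> E" using E(3) by blast
      then have c: "(\<epsilon>/2, Suc 0) \<in> E" using E(2) by auto
      obtain \<tau> where P: "\<And>s i. (s,i) \<in> E \<and> 0 \<le> s \<and> s \<le> \<epsilon>/2 \<and> i \<le> Suc 0 \<longleftrightarrow> i \<le> Suc 0 \<and> \<tau> i \<le> s \<and> s \<le> \<tau> (Suc i)"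
        using htd_obtain[OF sol_htd[OF E(1)] c] by metis
      have "\<tau> (Suc 0) \<le> 0" using P[of 0 "Suc 0"] a ep by auto
      moreover have "\<epsilon>/2 \<le> \<tau> (Suc 0)" using P[of "\<epsilon>/2" 0] b ep by auto
      ultimately show False using ep by simp
    qed
  next
    show "sv_image G D \<subseteq> K \<inter> D"
    proof
      fix y assume "y \<in> sv_image G D"
      then obtain x where x: "x \<in> D" "y \<in> G x" unfolding sv_image_def by blast
      define \<phi>0 where "\<phi>0 = (\<lambda>s::real\<times>nat. if snd s = 0 then x else y)"
      have s0: "is_solution C F D G ({0}\<times>{..Suc 0}) \<phi>0"
        by (rule sol_discrete) (use x in \<open>auto simp: \<phi>0_def le_Suc_eq\<close>)
      from ext[OF s0] obtain E \<phi> where E: "is_solution C F D G E \<phi>"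
        "\<forall>s\<in>E. (fst s, Suc (snd s)) \<in> E \<and> p (\<phi> (fst s, Suc (snd s)))" "{0}\<times>{..Suc 0} \<subseteq> E"
        "\<forall>s\<in>{0}\<times>{..Suc 0}. \<phi> s = \<phi>0 s"
        by blast
      have e0: "(0,0) \<in> E" "(0, Suc 0) \<in> E" using E(3) by auto
      have py: "\<phi> (0, Suc 0) = y" using E(4) by (simp add: \<phi>0_def)
      have "p y" using E(2) e0(1) py by force
      have "(0, Suc (Suc 0)) \<in> E" using E(2) e0(2) by force
      then have "y \<in> D" using sol_jump[OF E(1) e0(2)] py by simp
      moreover have "y \<in> X" using H x unfolding hybrid_system_def by blast
      ultimately show "y \<in> K \<inter> D" using \<open>p y\<close> K_def by simp
    qed
  next
    show "closure C \<subseteq> D"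
    proof
      fix x assume x: "x \<in> closure C"
      define \<phi>0 where "\<phi>0 = (\<lambda>s::real\<times>nat. x)"
      have s0: "is_solution C F D G ({0}\<times>{..0}) \<phi>0"
        by (rule sol_discrete) (use x in \<open>auto simp: \<phi>0_def\<close>)
      from ext[OF s0] obtain E \<phi> where E: "is_solution C F D G E \<phi>"
        "\<forall>s\<in>E. (fst s, Suc (snd s)) \<in> E \<and> p (\<phi> (fst s, Suc (snd s)))" "{0}\<times>{..0} \<subseteq> E"
        "\<forall>s\<in>{0}\<times>{..0}. \<phi> s = \<phi>0 s"
        by blast
      have e0: "(0,0) \<in> E" using E(3) by auto
      then have "(0, Suc 0) \<in> E" using E(2) by force
      then have "\<phi> (0,0) \<in> D" using sol_jump[OF E(1) e0] by simp
      then show "x \<in> D" using E(4) by (simp add: \<phi>0_def)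
    qed
  qed
next
  assume R: "(\<forall>E \<phi>. nontrivial_solution C F D G E \<phi> \<longrightarrow> \<phi> (0, 0) \<in> D) \<and>
      (\<not> (\<exists>x\<in>C. \<exists>E \<phi> \<epsilon>. is_solution C F D G E \<phi> \<and> \<phi> (0, 0) = x \<and> \<epsilon> > 0 \<and>
              {0..<\<epsilon>} \<times> {0} \<subseteq> E)) \<and>
      sv_image G D \<subseteq> K \<inter> D \<and>
      closure C \<subseteq> D"
  then have nb: "\<not> (\<exists>x\<in>C. \<exists>E \<phi> \<epsilon>. is_solution C F D G E \<phi> \<and> \<phi> (0, 0) = x \<and> \<epsilon> > 0 \<and>
              {0..<\<epsilon>} \<times> {0} \<subseteq> E)" and GD: "sv_image G D \<subseteq> K \<inter> D" and CD: "closure C \<subseteq> D"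
    by blast+
  show "\<forall>E \<phi>. maximal_solution C F D G E \<phi> \<longrightarrow> (\<forall>s\<in>E. models_next E \<phi> s p)"
  proof (intro allI impI ballI)
    fix E \<phi> s assume M: "maximal_solution C F D G E \<phi>" and sE: "s \<in> E"
    have sol: "is_solution C F D G E \<phi>" using M by (simp add: maximal_solution_def)
    have htd: "hybrid_time_domain E" using sol_htd[OF sol] .
    have ni: "\<And>j. interior (tdom_slice E j) = {}" using noflow[OF nb sol] .
    have deg: "\<And>T J. (T,J) \<in> E \<Longrightarrow> T = 0 \<and> (\<forall>i\<le>J. (0,i)\<in>E)"
      using htd_degenerate[OF htd ni] by blast
    have GimD: "\<And>x y. x \<in> D \<Longrightarrow> y \<in> G x \<Longrightarrow> y \<in> K \<inter> D"
      using GD unfolding sv_image_def by blast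
    have inD: "\<And>m. (0,m) \<in> E \<Longrightarrow> \<phi> (0,m) \<in> D"
    proof -
      fix m assume m: "(0,m) \<in> E"
      show "\<phi> (0,m) \<in> D"
      proof (cases m)
        case 0 then show ?thesis using sol_start[OF sol] CD by auto
      next
        case (Suc k)
        then have "(0,k) \<in> E" using deg[OF m] by simp
        then have "\<phi> (0,k) \<in> D" "\<phi> (0,Suc k) \<in> G (\<phi> (0,k))" using sol_jump[OF sol _ ] m Suc by auto
        then show ?thesis using GimD Suc by blast
      qed
    qed
    have allin: "\<And>m. (0,m) \<in> E"
    proof (rule ccontr)
      fix m assume "(0,m) \<notin> E"
      define n where "n = (LEAST m. (0,m) \<notin> E)"
      have nE: "(0,n) \<notin> E" unfolding n_def by (rule LeastI) (rule \<open>(0,m) \<notin> E\<close>)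
      have ltE: "\<And>i. i < n \<Longrightarrow> (0,i) \<in> E" unfolding n_def using not_less_Least by blast
      have "n \<noteq> 0"
      proof
        assume "n = 0" then show False using nE sol_00[OF sol] by simp
      qed
      then obtain k where nk: "n = Suc k" using not0_implies_Suc by blast
      have kE: "(0,k) \<in> E" using ltE nk by simp
      have Eeq: "E = {0}\<times>{..k}"
      proof
        show "E \<subseteq> {0}\<times>{..k}"
        proof (rule subrelI)
          fix T J assume TJ: "(T,J) \<in> E"
          have "J \<le> k"
          proof (rule ccontr)
            assume "\<not> J \<le> k"
            then have "n \<le> J" using nk by simp
            then show False using deg[OF TJ] nE by blast
          qed
          then show "(T,J) \<in> {0}\<times>{..k}" using deg[OF TJ] by simp
        qed
        show "{0}\<times>{..k} \<subseteq> E" using ltE nk by auto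
      qed
      have "\<phi> (0,k) \<in> D" using inD[OF kE] .
      then have "G (\<phi> (0,k)) \<noteq> {}" using H unfolding hybrid_system_def sv_dom_def by blast
      then obtain g where g: "g \<in> G (\<phi> (0,k))" by blast
      define \<psi> where "\<psi> = \<phi>((0, Suc k) := g)"
      have solp: "is_solution C F D G ({0}\<times>{..Suc k}) \<psi>"
      proof (rule sol_discrete)
        show "\<psi> (0,0) \<in> closure C \<union> D" using sol_start[OF sol] by (simp add: \<psi>_def)
        fix j assume j: "Suc j \<le> Suc k"
        show "\<psi> (0,j) \<in> D \<and> \<psi> (0,Suc j) \<in> G (\<psi> (0,j))"
        proof (cases "j = k")
          case True then show ?thesis using \<open>\<phi> (0,k) \<in> D\<close> g by (simp add: \<psi>_def)
        next
          case False
          then have "(0,j) \<in> E" "(0, Suc j) \<in> E" using j Eeq by auto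
          then show ?thesis using sol_jump[OF sol] False j by (simp add: \<psi>_def)
        qed
      qed
      moreover have "E \<subset> {0}\<times>{..Suc k}"
      proof -
        have "(0, Suc k) \<in> {0::real}\<times>{..Suc k}" by simp
        moreover have "(0::real, Suc k) \<notin> E" using nE nk by simp
        ultimately have "E \<noteq> {0}\<times>{..Suc k}" by blast
        moreover have "E \<subseteq> {0}\<times>{..Suc k}" unfolding Eeq by auto
        ultimately show ?thesis by blast
      qed
      moreover have "\<forall>s\<in>E. \<psi> s = \<phi> s" using nE nk by (auto simp: \<psi>_def)
      ultimately show False using M unfolding maximal_solution_def by blast
    qed
    obtain T J where s: "s = (T,J)" by fastforce
    have T0: "T = 0" using deg sE s by blast
    have J1: "(0, Suc J) \<in> E" using allin .
    have "\<phi> (0, Suc J) \<in> K" using GimD[OF inD[OF allin[of J]] conjunct2[OF sol_jump[OF sol allin allin]]] by blast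
    then have "p (\<phi> (0, Suc J))" using K_def by simp
    then show "models_next E \<phi> s p" using J1 s T0 by (simp add: models_next_def)
  qed
qed

end
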